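(* Consider the $(1,\lambda)$-CSA-ES without cumulation (i.e. $c=1$), with any $\lambda\ge1$ and $d_\sigma>0$, applied to $f(x)=[x]_1$ on $\mathbb{R}^n$. Let $\Delta_\sigma:=\frac{1}{2d_\sigma n}\big(\mathbb{E}(\mathcal{N}_{1:\lambda}^2)-1\big)$. Then (i) almost surely $\lim_{t\to\infty}\frac1t\ln(\sigma_t/\sigma_0)=\Delta_\sigma$, and (ii) for all $t\in\mathbb{N}$, $\mathbb{E}\big(\ln(\sigma_{t+1}/\sigma_t)\big)=\Delta_\sigma$.
   Context: For $x\in\mathbb{R}^n$, $[x]_i$ denotes its $i$-th coordinate. The $(1,\lambda)$-CSA-ES with parameters $\lambda\ge1$, $0<c\le1$, $d_\sigma>0$, minimizing $f:\mathbb{R}^n\to\mathbb{R}$, is defined as follows. Start from $X_0\in\mathbb{R}^n$, $\sigma_0>0$, and $p_0\sim\mathcal{N}(0,I_n)$. At iteration $t$, draw $\xi_{t,1},\ldots,\xi_{t,\lambda}$ i.i.d. $\sim\mathcal{N}(0,I_n)$, independent of everything before; the children are $Y_{t,i}=X_t+\sigma_t\xi_{t,i}$. The next parent $X_{t+1}$ is the child with the smallest $f$-value, and $\xi^\star_t$ denotes the corresponding $\xi_{t,i}$, so that $X_{t+1}=X_t+\sigma_t\xi^\star_t$. The cumulative path is $p_{t+1}=(1-c)p_t+\sqrt{c(2-c)}\,\xi^\star_t$, and the step-size is updated as $\sigma_{t+1}=\sigma_t\exp\!\big(\tfrac{c}{2d_\sigma}(\|p_{t+1}\|^2/n-1)\big)$.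 For i.i.d. standard normal $\mathcal{N}_1,\ldots,\mathcal{N}_\lambda$, $\mathcal{N}_{1:\lambda}$ denotes their minimum (first order statistic). *)

theory Defs
  imports "HOL-Probability.Probability"
begin

text \<open>Vectors of R^n are represented as functions nat => real, coordinates 0..n-1;
  the paper's first coordinate [x]_1 is coordinate 0.
  Noise: xi t i j is the j-th coordinate of xi_{t,i} (child i < lam at iteration t).\<close>

text \<open>Index of the selected child: the child with the smallest f-value
  (ties, a null event, broken by the smallest index).\<close>
definition selected :: "nat \<Rightarrow> ((nat \<Rightarrow> real) \<Rightarrow> real) \<Rightarrow> (nat \<Rightarrow> nat \<Rightarrow> real) \<Rightarrow> nat" where
  "selected lam f Y = (LEAST i. i < lam \<and> (\<forall>k<lam. f (Y i) \<le> f (Y k)))"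

fun csa_es :: "nat \<Rightarrow> nat \<Rightarrow> real \<Rightarrow> real \<Rightarrow> ((nat \<Rightarrow> real) \<Rightarrow> real)
    \<Rightarrow> (nat \<Rightarrow> real) \<Rightarrow> real \<Rightarrow> (nat \<Rightarrow> real) \<Rightarrow> (nat \<Rightarrow> nat \<Rightarrow> nat \<Rightarrow> real)
    \<Rightarrow> nat \<Rightarrow> (nat \<Rightarrow> real) \<times> real \<times> (nat \<Rightarrow> real)" where
  "csa_es n lam c d f X0 s0 p0 xi 0 = (X0, s0, p0)"
| "csa_es n lam c d f X0 s0 p0 xi (Suc t) =
     (case csa_es n lam c d f X0 s0 p0 xi t of (X, s, p) \<Rightarrow>
        let Y = (\<lambda>i j. X j + s * xi t i j);
            istar = selected lam f Y;
            xs = xi t istar;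
            p' = (\<lambda>j. (1 - c) * p j + sqrt (c * (2 - c)) * xs j);
            s' = s * exp (c / (2 * d) * ((\<Sum>j<n. (p' j)\<^sup>2) / real n - 1))
        in (\<lambda>j. X j + s * xs j, s', p'))"

definition std_normal_measure :: "real measure" where
  "std_normal_measure = density lborel (\<lambda>x. ennreal (std_normal_density x))"

definition min_normal_second_moment :: "nat \<Rightarrow> real" where
  "min_normal_second_moment lam =
     integral\<^sup>L (PiM {..<lam} (\<lambda>_. std_normal_measure)) (\<lambda>x. (Min (x ` {..<lam}))\<^sup>2)"

end

theory Submission
  imports Defs "HOL-Probability.Probability"
begin

lemma pow4_add_le: "((a::real)+b)^4 \<le> 8*(a^4+b^4)"
proof -
  have sq: "(x+y)^2 \<le> 2*(x^2+y^2)" for x y :: real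
  proof -
    have "(x+y)^2 + (x-y)^2 = 2*(x^2+y^2)" by (simp add: power2_eq_square algebra_simps)
    moreover have "0 \<le> (x-y)^2" by simp
    ultimately show ?thesis by linarith
  qed
  have 1: "(a+b)^2 \<le> 2*(a^2+b^2)" by (rule sq)
  have "(a+b)^4 = ((a+b)^2)^2" by simp
  also have "\<dots> \<le> (2*(a^2+b^2))^2" using 1 by (intro power_mono) auto
  also have "\<dots> \<le> 8*(a^4+b^4)" using sq[of "a^2" "b^2"]
    by (simp add: power2_eq_square power4_eq_xxxx algebra_simps)
  finally show ?thesis .
qed

lemma abs_pow_le_1_pow4: "k \<le> 4 \<Longrightarrow> \<bar>(x::real)\<bar>^k \<le> 1 + x^4"
proof (cases "\<bar>x\<bar> \<le> 1")
  case True
  then have "\<bar>x\<bar>^k \<le> 1" by (simp add: power_le_one)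
  moreover have "0 \<le> x^4" using zero_le_power2[of "x^2"] by simp
  ultimately show ?thesis by linarith
next
  case False
  assume k: "k \<le> 4"
  then have "\<bar>x\<bar>^k \<le> \<bar>x\<bar>^4" using False by (intro power_increasing) auto
  then show ?thesis by (simp add: power_abs)
qed

lemma integrable_pow_le4:
  assumes "integrable M (\<lambda>\<omega>. (X \<omega>::real)^4)" "X \<in> borel_measurable M" "k \<le> 4"
    "finite_measure M"
  shows "integrable M (\<lambda>\<omega>. X \<omega> ^ k)"
proof (rule Bochner_Integration.integrable_bound)
  show "integrable M (\<lambda>\<omega>. 1 + X \<omega>^4)"
    using assms by (intro Bochner_Integration.integrable_add finite_measure.integrable_const) auto
  show "(\<lambda>\<omega>. X \<omega> ^ k) \<in> borel_measurable M" using assms by measurable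
  show "AE \<omega> in M. norm (X \<omega> ^ k) \<le> norm (1 + X \<omega>^4)"
    using abs_pow_le_1_pow4[OF assms(3)] by (auto simp: power_abs)
qed

lemma exp4: "((a::real)+b)^4 = a^4 + 4*(b*a^3) + 6*(b^2*a^2) + 4*(b^3*a) + b^4"
  by (simp add: power2_eq_square power3_eq_cube power4_eq_xxxx algebra_simps)
lemma exp2: "((a::real)+b)^2 = a^2 + 2*(b*a) + b^2"
  by (simp add: power2_eq_square algebra_simps)

context prob_space begin

lemma slln4:
  fixes Y :: "nat \<Rightarrow> 'a \<Rightarrow> real"
  assumes ind: "indep_vars (\<lambda>_. borel) Y UNIV"
    and int4: "\<And>t. integrable M (\<lambda>\<omega>. (Y t \<omega>)^4)"
    and mean: "\<And>t. expectation (Y t) = 0"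
    and bnd: "\<And>t. expectation (\<lambda>\<omega>. (Y t \<omega>)^4) \<le> K"
  shows "AE \<omega> in M. (\<lambda>T. (\<Sum>t<T. Y t \<omega>) / real T) \<longlonglongrightarrow> 0"
proof -
  have rv[measurable]: "\<And>t. Y t \<in> borel_measurable M" using ind by (auto simp: indep_vars_def)
  have intY: "\<And>t k. k \<le> 4 \<Longrightarrow> integrable M (\<lambda>\<omega>. Y t \<omega> ^ k)"
    by (rule integrable_pow_le4[OF int4]) (auto intro: finite_measure_axioms)
  define S where "S T \<omega> = (\<Sum>t<T. Y t \<omega>)" for T \<omega>
  have Smeas[measurable]: "\<And>T. S T \<in> borel_measurable M" unfolding S_def by measurable
  have Smean: "expectation (S T) = 0" for T
    unfolding S_def using intY[of 1] mean by (subst Bochner_Integration.integral_sum) auto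
  have K0': "0 \<le> expectation (\<lambda>\<omega>. Y 0 \<omega>^4)"
    using zero_le_power2 by (intro integral_nonneg_AE) (auto simp: power_mult[symmetric])
  have K0: "0 \<le> K" using K0' bnd[of 0] by linarith
  define v where "v = (1 + K) / 2"
  have EY2: "expectation (\<lambda>\<omega>. Y t \<omega>^2) \<le> v" for t
  proof -
    have "expectation (\<lambda>\<omega>. Y t \<omega>^2) \<le> expectation (\<lambda>\<omega>. (1 + Y t \<omega>^4)/2)"
      using intY[of 2 t] intY[of 4 t]
    proof (intro integral_mono)
      show "integrable M (\<lambda>\<omega>. (1 + Y t \<omega>^4)/2)" using intY[of 4 t] by auto
      fix \<omega> show "Y t \<omega>^2 \<le> (1 + Y t \<omega>^4)/2"
      proof -
        have "0 \<le> (Y t \<omega>^2 - 1)^2" by simp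
        moreover have "(Y t \<omega>^2 - 1)^2 = Y t \<omega>^4 - 2 * Y t \<omega>^2 + 1"
          by (simp add: power2_eq_square power4_eq_xxxx algebra_simps)
        ultimately have "2 * Y t \<omega>^2 \<le> 1 + Y t \<omega>^4" by linarith
        then show ?thesis by simp
      qed
    qed auto
    also have "\<dots> = (1 + expectation (\<lambda>\<omega>. Y t \<omega>^4)) / 2"
      using intY[of 4 t] prob_space by (simp add: Bochner_Integration.integral_add)
    finally show ?thesis using bnd[of t] unfolding v_def by simp
  qed
  have EY2nn: "0 \<le> expectation (\<lambda>\<omega>. Y t \<omega>^2)" for t by (rule integral_nonneg_AE) auto
  have v0: "0 \<le> v" using K0 unfolding v_def by simp
  have indS: "indep_var borel (Y T) borel (S T)" for T
    unfolding S_def[abs_def]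
    by (rule indep_vars_sum) (auto intro: indep_vars_subset[OF ind])
  define B where "B = 3 * v^2 + K"
  have main: "integrable M (\<lambda>\<omega>. S T \<omega>^4) \<and> expectation (\<lambda>\<omega>. S T \<omega>^2) \<le> real T * v
        \<and> expectation (\<lambda>\<omega>. S T \<omega>^4) \<le> B * (real T)^2" for T
  proof (induction T)
    case 0
    then show ?case by (simp add: S_def)
  next
    case (Suc T)
    have IS: "\<And>k. k \<le> 4 \<Longrightarrow> integrable M (\<lambda>\<omega>. S T \<omega> ^ k)"
      by (rule integrable_pow_le4[OF conjunct1[OF Suc.IH] Smeas _ finite_measure_axioms])
    have prod: "integrable M (\<lambda>\<omega>. Y T \<omega> ^ a * S T \<omega> ^ b) \<and>
       expectation (\<lambda>\<omega>. Y T \<omega> ^ a * S T \<omega> ^ b) = expectation (\<lambda>\<omega>. Y T \<omega> ^ a) * expectation (\<lambda>\<omega>. S T \<omega> ^ b)"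
      if "a \<le> 4" "b \<le> 4" for a b
    proof -
      have iv: "indep_var borel ((\<lambda>x. x^a) \<circ> Y T) borel ((\<lambda>x. x^b) \<circ> S T)"
        by (rule indep_var_compose[OF indS]) auto
      then have iv': "indep_var borel (\<lambda>\<omega>. Y T \<omega>^a) borel (\<lambda>\<omega>. S T \<omega>^b)" by (simp add: comp_def)
      show ?thesis using indep_var_lebesgue_integral[OF iv' intY[OF that(1)] IS[OF that(2)]]
         indep_var_integrable[OF iv' intY[OF that(1)] IS[OF that(2)]] by simp
    qed
    have SS: "S (Suc T) \<omega> = S T \<omega> + Y T \<omega>" for \<omega> by (simp add: S_def)
    have p11: "integrable M (\<lambda>\<omega>. Y T \<omega> * S T \<omega>)" "expectation (\<lambda>\<omega>. Y T \<omega> * S T \<omega>) = 0"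
      using prod[of 1 1] Smean[of T] mean[of T] by auto
    have p13: "integrable M (\<lambda>\<omega>. Y T \<omega> * S T \<omega>^3)" "expectation (\<lambda>\<omega>. Y T \<omega> * S T \<omega>^3) = 0"
      using prod[of 1 3] mean[of T] by auto
    have p31: "integrable M (\<lambda>\<omega>. Y T \<omega>^3 * S T \<omega>)" "expectation (\<lambda>\<omega>. Y T \<omega>^3 * S T \<omega>) = 0"
      using prod[of 3 1] Smean[of T] by auto
    have p22: "integrable M (\<lambda>\<omega>. Y T \<omega>^2 * S T \<omega>^2)" "expectation (\<lambda>\<omega>. Y T \<omega>^2 * S T \<omega>^2) = expectation (\<lambda>\<omega>. Y T \<omega>^2) * expectation (\<lambda>\<omega>. S T \<omega>^2)"
      using prod[of 2 2] by auto
    have e2: "(\<lambda>\<omega>. S (Suc T) \<omega> ^2) = (\<lambda>\<omega>. S T \<omega>^2 + 2 * (Y T \<omega> * S T \<omega>) + Y T \<omega>^2)"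
      by (rule ext) (simp only: SS exp2)
    have e4: "(\<lambda>\<omega>. S (Suc T) \<omega> ^4) = (\<lambda>\<omega>. S T \<omega>^4 + 4 * (Y T \<omega> * S T \<omega>^3) + 6 * (Y T \<omega>^2 * S T \<omega>^2)
       + 4 * (Y T \<omega>^3 * S T \<omega>) + Y T \<omega>^4)"
      by (rule ext) (simp only: SS exp4)
    have hb: "\<And>f. integrable M f \<Longrightarrow> has_bochner_integral M f (expectation f)"
      by (rule has_bochner_integral_integrable)
    have H4: "has_bochner_integral M (\<lambda>\<omega>. S T \<omega>^4 + 4 * (Y T \<omega> * S T \<omega>^3) + 6 * (Y T \<omega>^2 * S T \<omega>^2)
       + 4 * (Y T \<omega>^3 * S T \<omega>) + Y T \<omega>^4) (expectation (\<lambda>\<omega>. S T \<omega>^4) + 4 * 0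
       + 6 * (expectation (\<lambda>\<omega>. Y T \<omega>^2) * expectation (\<lambda>\<omega>. S T \<omega>^2)) + 4 * 0 + expectation (\<lambda>\<omega>. Y T \<omega>^4))"
      apply (intro has_bochner_integral_add has_bochner_integral_mult_right)
      using hb[OF p13(1)] hb[OF p31(1)] hb[OF p22(1)] hb[OF IS[of 4]] hb[OF intY[of 4 T]]
      unfolding p13(2) p31(2) p22(2) by auto
    have H2: "has_bochner_integral M (\<lambda>\<omega>. S T \<omega>^2 + 2 * (Y T \<omega> * S T \<omega>) + Y T \<omega>^2)
       (expectation (\<lambda>\<omega>. S T \<omega>^2) + 2 * 0 + expectation (\<lambda>\<omega>. Y T \<omega>^2))"
      apply (intro has_bochner_integral_add has_bochner_integral_mult_right)
      using hb[OF p11(1)] hb[OF IS[of 2]] hb[OF intY[of 2 T]]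
      unfolding p11(2) by auto
    have I4: "integrable M (\<lambda>\<omega>. S (Suc T) \<omega> ^4)"
      unfolding e4 using H4 by (simp add: has_bochner_integral_iff)
    have E2: "expectation (\<lambda>\<omega>. S (Suc T) \<omega>^2) = expectation (\<lambda>\<omega>. S T \<omega>^2) + expectation (\<lambda>\<omega>. Y T \<omega>^2)"
      unfolding e2 using H2 by (simp add: has_bochner_integral_iff)
    have E4: "expectation (\<lambda>\<omega>. S (Suc T) \<omega>^4) = expectation (\<lambda>\<omega>. S T \<omega>^4)
       + 6 * (expectation (\<lambda>\<omega>. Y T \<omega>^2) * expectation (\<lambda>\<omega>. S T \<omega>^2)) + expectation (\<lambda>\<omega>. Y T \<omega>^4)"
      unfolding e4 using H4 by (simp add: has_bochner_integral_iff)
    have ES2nn: "0 \<le> expectation (\<lambda>\<omega>. S T \<omega>^2)" by (rule integral_nonneg_AE) auto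
    have "expectation (\<lambda>\<omega>. Y T \<omega>^2) * expectation (\<lambda>\<omega>. S T \<omega>^2) \<le> v * (real T * v)"
      using Suc.IH EY2[of T] EY2nn[of T] ES2nn v0 by (intro mult_mono) auto
    then have "expectation (\<lambda>\<omega>. S (Suc T) \<omega>^4) \<le> B * (real T)^2 + 6 * (v * (real T * v)) + K"
      using E4 Suc.IH bnd[of T] by linarith
    also have "\<dots> \<le> B * (real (Suc T))^2"
      unfolding B_def using K0 by (simp add: power2_eq_square algebra_simps)
    moreover have "expectation (\<lambda>\<omega>. S (Suc T) \<omega>^2) \<le> real (Suc T) * v"
      using E2 Suc.IH EY2[of T] by (simp add: algebra_simps)
    ultimately show ?case using I4 by simp
  qed
  have S4: "integrable M (\<lambda>\<omega>. S T \<omega>^4)" "expectation (\<lambda>\<omega>. S T \<omega>^4) \<le> B * (real T)^2" for T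
    using main[of T] by auto
  have B0: "0 \<le> B" unfolding B_def using K0 by simp
  have ae_eps: "AE \<omega> in M. eventually (\<lambda>T. \<bar>S T \<omega>\<bar> < e * real T) sequentially" if e: "e > 0" for e
  proof -
    define A where "A T = {\<omega>\<in>space M. (e * real T)^4 \<le> S T \<omega>^4}" for T
    have Asets[measurable]: "A T \<in> sets M" for T unfolding A_def by measurable
    have mA: "measure M (A T) \<le> B / e^4 * inverse (real T ^ 2)" if T: "T \<ge> 1" for T
    proof -
      have "measure M (A T) \<le> expectation (\<lambda>\<omega>. S T \<omega>^4) / (e*real T)^4"
        unfolding A_def using S4(1) that e by (intro integral_Markov_inequality_measure) auto
      also have "\<dots> \<le> B * (real T)^2 / (e * real T)^4" using S4(2)[of T] T e
        by (intro divide_right_mono) auto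
      also have "\<dots> = B / e^4 * inverse (real T^2)" using T e
        by (simp add: field_simps power_mult_distrib power2_eq_square power4_eq_xxxx)
      finally show ?thesis .
    qed
    have summ: "summable (\<lambda>T. measure M (A T))"
    proof (rule summable_comparison_test')
      show "summable (\<lambda>T. B / e^4 * inverse (real T ^ 2))"
        using inverse_power_summable[of 2, where 'a=real] by (intro summable_mult) auto
      show "norm (measure M (A T)) \<le> B / e^4 * inverse (real T ^ 2)" if "T \<ge> 1" for T
        using mA[OF that] by simp
    qed
    have "AE \<omega> in M. eventually (\<lambda>T. \<omega> \<in> space M - A T) sequentially"
      by (rule borel_cantelli_AE1) (auto simp: summ intro: emeasure_finite[THEN less_top[THEN iffD1]])
    then show ?thesis
    proof eventually_elim
      case (elim \<omega>)
      show ?case using elim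
      proof (rule eventually_mono)
        fix T assume "\<omega> \<in> space M - A T"
        then have "S T \<omega>^4 < (e*real T)^4" unfolding A_def by auto
        then have "\<bar>S T \<omega>\<bar>^4 < (e*real T)^4" by (simp add: power_even_abs_numeral)
        then show "\<bar>S T \<omega>\<bar> < e*real T" by (rule power_less_imp_less_base) (use e in auto)
      qed
    qed
  qed
  have "AE \<omega> in M. \<forall>m::nat. eventually (\<lambda>T. \<bar>S T \<omega>\<bar> < (1 / Suc m) * real T) sequentially"
    unfolding AE_all_countable by (intro allI ae_eps) simp
  then show ?thesis
  proof eventually_elim
    case (elim \<omega>)
    show ?case unfolding LIMSEQ_iff
    proof (intro allI impI)
      fix r :: real assume r: "r > 0"
      obtain m where m: "inverse (real (Suc m)) < r" using reals_Archimedean[OF r] by auto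
      obtain N where N: "\<And>T. T \<ge> N \<Longrightarrow> \<bar>S T \<omega>\<bar> < (1 / Suc m) * real T"
        using elim[rule_format, of m] unfolding eventually_sequentially by auto
      show "\<exists>no. \<forall>T\<ge>no. norm ((\<Sum>t<T. Y t \<omega>) / real T - 0) < r"
      proof (intro exI allI impI)
        fix T assume T: "T \<ge> max N 1"
        have "\<bar>S T \<omega>\<bar> / real T < 1 / Suc m" using N[of T] T by (simp add: field_simps)
        moreover have "1 / real (Suc m) < r" using m by (simp add: inverse_eq_divide)
        ultimately have "\<bar>S T \<omega>\<bar> / real T < r" by (rule order.strict_trans)
        then show "norm ((\<Sum>t<T. Y t \<omega>) / real T - 0) < r"
          by (simp add: S_def)
      qed
    qed
  qed
qed

end

definition selmat :: "nat \<Rightarrow> (nat \<Rightarrow> real) \<Rightarrow> nat \<Rightarrow> bool" where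
  "selmat lam a i \<longleftrightarrow> i < lam \<and> (\<forall>k\<in>{..<lam}. a i \<le> a k) \<and> (\<forall>k\<in>{..<i}. \<exists>k'\<in>{..<lam}. a k' < a k)"

definition istar :: "nat \<Rightarrow> (nat \<Rightarrow> real) \<Rightarrow> nat" where
  "istar lam a = (LEAST i. i < lam \<and> (\<forall>k<lam. a i \<le> a k))"

definition Qf :: "nat \<Rightarrow> nat \<Rightarrow> (nat \<Rightarrow> nat \<Rightarrow> real) \<Rightarrow> real" where
  "Qf lam n m = (\<Sum>i<lam. if selmat lam (\<lambda>k. m k 0) i then \<Sum>j<n. (m i j)^2 else 0)"

lemma istar_props:
  assumes "lam \<ge> 1"
  shows "istar lam a < lam" "\<And>k. k < lam \<Longrightarrow> a (istar lam a) \<le> a k"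
proof -
  have "0 \<in> {..<lam}" using assms by simp
  then have fin: "finite (a ` {..<lam})" "a ` {..<lam} \<noteq> {}" by auto
  obtain i where i: "i < lam" "a i = Min (a ` {..<lam})"
    using Min_in[OF fin] by auto
  have ex: "\<exists>i. i < lam \<and> (\<forall>k<lam. a i \<le> a k)"
    using i fin by (intro exI[of _ i]) auto
  show "istar lam a < lam" "\<And>k. k < lam \<Longrightarrow> a (istar lam a) \<le> a k"
    using LeastI_ex[OF ex] unfolding istar_def by auto
qed

lemma selmat_iff:
  assumes "lam \<ge> 1"
  shows "selmat lam a i \<longleftrightarrow> istar lam a = i"
proof
  assume s: "selmat lam a i"
  show "istar lam a = i" unfolding istar_def
  proof (rule Least_equality)
    show "i < lam \<and> (\<forall>k<lam. a i \<le> a k)" using s unfolding selmat_def by auto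
    fix y assume y: "y < lam \<and> (\<forall>k<lam. a y \<le> a k)"
    show "i \<le> y"
    proof (rule ccontr)
      assume "\<not> i \<le> y"
      then have "y < i" by simp
      then obtain k' where "k' < lam" "a k' < a y" using s unfolding selmat_def by auto
      then show False using y by force
    qed
  qed
next
  assume e: "istar lam a = i"
  have "\<exists>k'\<in>{..<lam}. a k' < a k" if k: "k < istar lam a" for k
  proof -
    have "\<not> (k < lam \<and> (\<forall>k'<lam. a k \<le> a k'))"
      using not_less_Least[OF k[unfolded istar_def]] .
    moreover have "k < lam" using k istar_props[OF assms] by (meson order.strict_trans)
    ultimately show ?thesis by (auto simp: not_le)
  qed
  then show "selmat lam a i" using istar_props[OF assms] e unfolding selmat_def by auto
qed

lemma sum_selmat_delta:
  assumes "lam \<ge> 1"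
  shows "(\<Sum>i<lam. if selmat lam a i then f i else 0) = f (istar lam a)"
proof -
  have "(\<Sum>i<lam. if selmat lam a i then f i else 0) = (\<Sum>i<lam. if istar lam a = i then f i else 0)"
    using selmat_iff[OF assms] by simp
  also have "\<dots> = f (istar lam a)" using istar_props(1)[OF assms] by (simp add: sum.delta)
  finally show ?thesis .
qed

lemma istar_Min:
  assumes "lam \<ge> 1"
  shows "a (istar lam a) = Min (a ` {..<lam})"
proof -
  have "0 \<in> {..<lam}" using assms by simp
  then have fin: "finite (a ` {..<lam})" "a ` {..<lam} \<noteq> {}" by auto
  show ?thesis
    using istar_props[OF assms] fin
    by (intro antisym Min.coboundedI Min.boundedI) auto
qed

lemma Qf_eq:
  assumes "lam \<ge> 1"
  shows "Qf lam n m = (\<Sum>j<n. (m (istar lam (\<lambda>k. m k 0)) j)^2)"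
  unfolding Qf_def by (rule sum_selmat_delta[OF assms])

lemma Qf_nonneg: "0 \<le> Qf lam n m"
  unfolding Qf_def by (intro sum_nonneg) (auto intro: sum_nonneg)

lemma Qf_le: "Qf lam n m \<le> (\<Sum>p\<in>{..<lam}\<times>{..<n}. (m (fst p) (snd p))^2)"
proof -
  have "Qf lam n m \<le> (\<Sum>i<lam. \<Sum>j<n. (m i j)^2)"
    unfolding Qf_def by (intro sum_mono) (auto intro: sum_nonneg)
  also have "\<dots> = (\<Sum>p\<in>{..<lam}\<times>{..<n}. (m (fst p) (snd p))^2)"
    by (simp add: sum.cartesian_product case_prod_beta)
  finally show ?thesis .
qed

lemma csa_step:
  fixes xi' :: "nat \<Rightarrow> nat \<Rightarrow> nat \<Rightarrow> real"
  assumes pos: "fst (snd (csa_es n lam 1 d (\<lambda>x. x 0) X0 s0 p0 xi' t)) > 0"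
  shows "fst (snd (csa_es n lam 1 d (\<lambda>x. x 0) X0 s0 p0 xi' (Suc t))) =
    fst (snd (csa_es n lam 1 d (\<lambda>x. x 0) X0 s0 p0 xi' t)) *
      exp (1 / (2 * d) * ((\<Sum>j<n. (xi' t (istar lam (\<lambda>i. xi' t i 0)) j)^2) / real n - 1))"
proof -
  obtain X s p where e: "csa_es n lam 1 d (\<lambda>x. x 0) X0 s0 p0 xi' t = (X, s, p)"
    by (cases "csa_es n lam 1 d (\<lambda>x. x 0) X0 s0 p0 xi' t") auto
  have s: "s > 0" using pos e by simp
  have sel: "selected lam (\<lambda>x. x 0) (\<lambda>i j. X j + s * xi' t i j) = istar lam (\<lambda>i. xi' t i 0)"
    unfolding selected_def istar_def using s by simp
  show ?thesis by (simp add: e sel Let_def)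
qed

lemma csa_pos:
  fixes xi' :: "nat \<Rightarrow> nat \<Rightarrow> nat \<Rightarrow> real"
  assumes "s0 > 0"
  shows "fst (snd (csa_es n lam 1 d (\<lambda>x. x 0) X0 s0 p0 xi' t)) > 0"
proof (induction t)
  case 0 then show ?case using assms by simp
next
  case (Suc t) then show ?case by (simp only: csa_step[OF Suc.IH]) simp
qed

lemma selmat_cong:
  assumes "\<And>k. k < lam \<Longrightarrow> a k = a' k"
  shows "selmat lam a i = selmat lam a' i"
  unfolding selmat_def using assms by auto

lemma Qf_cong:
  assumes "\<And>i j. i < lam \<Longrightarrow> j < n \<Longrightarrow> m i j = m' i j" "n \<ge> 1"
  shows "Qf lam n m = Qf lam n m'"
proof -
  have "selmat lam (\<lambda>k. m k 0) i = selmat lam (\<lambda>k. m' k 0) i" for i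
    using assms by (intro selmat_cong) auto
  then show ?thesis unfolding Qf_def
  proof (intro sum.cong refl)
    fix i assume i: "i \<in> {..<lam}"
    have "(\<Sum>j<n. (m i j)^2) = (\<Sum>j<n. (m' i j)^2)" using i assms(1) by (intro sum.cong refl) auto
    then show "(if selmat lam (\<lambda>k. m k 0) i then \<Sum>j<n. (m i j)^2 else 0) =
      (if selmat lam (\<lambda>k. m' k 0) i then \<Sum>j<n. (m' i j)^2 else 0)"
      using \<open>selmat lam (\<lambda>k. m k 0) i = selmat lam (\<lambda>k. m' k 0) i\<close> by simp
  qed
qed

lemma component_meas[measurable]:
  "(\<lambda>v. v x) \<in> borel_measurable (PiM K (\<lambda>_. (borel :: real measure)))"
proof (cases "x \<in> K")
  case True then show ?thesis by (rule measurable_component_singleton)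
next
  case False
  show ?thesis
    by (rule measurable_cong[THEN iffD2, of _ _ "\<lambda>v. undefined"]) (use False in \<open>auto simp: space_PiM intro: PiE_arb\<close>)
qed

lemma Qf_meas:
  assumes [measurable]: "\<And>i j. (\<lambda>x. f x i j) \<in> borel_measurable N"
  shows "(\<lambda>x. Qf lam n (f x)) \<in> borel_measurable N"
  unfolding Qf_def selmat_def by measurable

lemma selmat_pred:
  assumes [measurable]: "\<And>k. (\<lambda>x. f x k) \<in> borel_measurable N"
  shows "Measurable.pred N (\<lambda>x. selmat lam (f x) i)"
proof (cases "i < lam")
  case True
  have [measurable]: "Measurable.pred N (\<lambda>x. f x k \<le> f x k')" for k k'
    unfolding Measurable.pred_def by (rule borel_measurable_le) (rule assms)+
  have [measurable]: "Measurable.pred N (\<lambda>x. f x k < f x k')" for k k'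
    unfolding Measurable.pred_def by (rule borel_measurable_less) (rule assms)+
  have "Measurable.pred N (\<lambda>x. (\<forall>k\<in>{..<lam}. f x i \<le> f x k) \<and> (\<forall>k\<in>{..<i}. \<exists>k'\<in>{..<lam}. f x k' < f x k))"
    by measurable
  then show ?thesis using True unfolding selmat_def by simp
next
  case False
  then show ?thesis unfolding selmat_def by simp
qed

lemma sum_pow4_le:
  fixes f :: "'c \<Rightarrow> real"
  shows "(\<Sum>x\<in>S. (f x)^2)^4 \<le> real (card S)^3 * (\<Sum>x\<in>S. (f x)^8)"
proof -
  define P where "P = (\<Sum>x\<in>S. (f x)^2)"
  define R4 where "R4 = (\<Sum>x\<in>S. (f x)^4)"
  define R8 where "R8 = (\<Sum>x\<in>S. (f x)^8)"
  have 1: "P^2 \<le> R4 * card S"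
    using sum_squared_le_sum_of_squares[of "\<lambda>x. (f x)^2" S]
    unfolding P_def R4_def by (simp add: power_mult[symmetric])
  have 2: "R4^2 \<le> R8 * card S"
    using sum_squared_le_sum_of_squares[of "\<lambda>x. (f x)^4" S]
    unfolding R8_def R4_def by (simp add: power_mult[symmetric])
  have "P^4 = (P^2)^2" by simp
  also have "\<dots> \<le> (R4 * card S)^2" using 1 by (intro power_mono) auto
  also have "\<dots> = R4^2 * (real (card S))^2" by (simp add: power_mult_distrib)
  also have "\<dots> \<le> (R8 * card S) * (real (card S))^2" using 2 by (intro mult_right_mono) auto
  also have "\<dots> = real (card S)^3 * R8" by (simp add: power2_eq_square power3_eq_cube)
  finally show ?thesis unfolding P_def R8_def .
qed

context prob_space begin

lemma model:
  fixes n lam :: nat and d :: real and xi :: "nat \<Rightarrow> nat \<Rightarrow> nat \<Rightarrow> 'a \<Rightarrow> real"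
    and W :: "'b + (nat \<times> nat \<times> nat) \<Rightarrow> 'a \<Rightarrow> real" and I
  assumes n: "n \<ge> 1" and lam: "lam \<ge> 1" and d: "d > 0"
    and WI: "\<And>t i j. W (Inr (t,i,j)) = xi t i j"
    and II: "\<And>t i j. i < lam \<Longrightarrow> j < n \<Longrightarrow> Inr (t,i,j) \<in> I"
    and ind: "indep_vars (\<lambda>_. borel) W I"
    and dist: "\<And>k. k \<in> I \<Longrightarrow> distributed M lborel (W k) std_normal_density"
  defines "Z \<equiv> \<lambda>t \<omega>. 1 / (2 * d) * (Qf lam n (\<lambda>i j. xi t i j \<omega>) / real n - 1)"
  defines "Delta \<equiv> (min_normal_second_moment lam - 1) / (2 * d * real n)"
  shows "AE \<omega> in M. (\<lambda>T. (\<Sum>t<T. Z t \<omega>) / real T) \<longlonglongrightarrow> Delta"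
    and "\<And>t. integrable M (Z t)" and "\<And>t. expectation (Z t) = Delta"
proof -
  have D: "distributed M lborel (xi t i j) std_normal_density" if "i < lam" "j < n" for t i j
    using dist[OF II[OF that, of t]] by (simp add: WI)
  have xm: "xi t i j \<in> borel_measurable M" if "i < lam" "j < n" for t i j
    using distributed_measurable[OF D[OF that]] by simp
  have mom: "integrable M (\<lambda>\<omega>. (xi t i j \<omega>)^k) \<and>
      expectation (\<lambda>\<omega>. (xi t i j \<omega>)^k) = (\<integral>x. std_normal_density x * x^k \<partial>lborel)"
    if "i < lam" "j < n" for t i j k
  proof
    show "integrable M (\<lambda>\<omega>. (xi t i j \<omega>)^k)"
      using distributed_integrable[OF D[OF that], of "\<lambda>x. x^k"] integrable_std_normal_moment[of k]
      by (simp add: normal_density_nonneg)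
    show "expectation (\<lambda>\<omega>. (xi t i j \<omega>)^k) = (\<integral>x. std_normal_density x * x^k \<partial>lborel)"
      using distributed_integral[OF D[OF that], of "\<lambda>x. x^k"]
      by (simp add: normal_density_nonneg)
  qed
  have mom2: "expectation (\<lambda>\<omega>. (xi t i j \<omega>)^2) = 1" if "i < lam" "j < n" for t i j
    using mom[OF that, of t 2] integral_std_normal_moment_even[of 1] by simp
  define K :: "nat \<Rightarrow> ('b + nat \<times> nat \<times> nat) set" where "K t = {Inr (t,i,j) | i j. i < lam \<and> j < n}" for t
  have KI: "K t \<subseteq> I" for t unfolding K_def using II by auto
  have Kdisj: "disjoint_family_on K UNIV" unfolding disjoint_family_on_def K_def by auto
  define G where "G t v = 1 / (2 * d) * (Qf lam n (\<lambda>i j. v (Inr (t,i,j))) / real n - 1)"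
    for t and v :: "'b + nat \<times> nat \<times> nat \<Rightarrow> real"
  have Gm: "G t \<in> borel_measurable (PiM (K t) (\<lambda>_. borel))" for t
  proof -
    have [measurable]: "(\<lambda>v. Qf lam n (\<lambda>i j. v (Inr (t,i,j)))) \<in> borel_measurable (PiM (K t) (\<lambda>_. borel))"
      by (rule Qf_meas) (rule component_meas)
    show ?thesis unfolding G_def by measurable
  qed
  have ZG: "Z t = (\<lambda>\<omega>. G t (restrict (\<lambda>k. W k \<omega>) (K t)))" for t
  proof
    fix \<omega>
    have "Qf lam n (\<lambda>i j. xi t i j \<omega>) = Qf lam n (\<lambda>i j. restrict (\<lambda>k. W k \<omega>) (K t) (Inr (t,i,j)))"
      by (rule Qf_cong[OF _ n]) (auto simp: K_def WI)
    then show "Z t \<omega> = G t (restrict (\<lambda>k. W k \<omega>) (K t))" unfolding Z_def G_def by simp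
  qed
  have Vm: "(\<lambda>\<omega>. restrict (\<lambda>k. W k \<omega>) J) \<in> measurable M (PiM J (\<lambda>_. borel))" if "J \<subseteq> I" for J
    using that ind by (auto simp: indep_vars_def intro!: measurable_restrict)
  have Zm[measurable]: "Z t \<in> borel_measurable M" for t
    unfolding ZG by (rule measurable_comp[OF Vm[OF KI] Gm, unfolded comp_def])
  define IJ where "IJ = {..<lam} \<times> {..<n}"
  have IJfin: "finite IJ" and IJcard: "card IJ = lam * n" unfolding IJ_def by auto
  define P where "P t \<omega> = (\<Sum>p\<in>IJ. (xi t (fst p) (snd p) \<omega>)^2)" for t \<omega>
  have IJmem: "p \<in> IJ \<Longrightarrow> fst p < lam \<and> snd p < n" for p unfolding IJ_def by auto
  have sumpow: "integrable M (\<lambda>\<omega>. \<Sum>p\<in>IJ. (xi t (fst p) (snd p) \<omega>)^k) \<and>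
      expectation (\<lambda>\<omega>. \<Sum>p\<in>IJ. (xi t (fst p) (snd p) \<omega>)^k) = real (lam * n) * (\<integral>x. std_normal_density x * x^k \<partial>lborel)" for t k
  proof -
    have "\<And>p. p \<in> IJ \<Longrightarrow> integrable M (\<lambda>\<omega>. (xi t (fst p) (snd p) \<omega>)^k)"
      using mom IJmem by blast
    moreover have "\<And>p. p \<in> IJ \<Longrightarrow> expectation (\<lambda>\<omega>. (xi t (fst p) (snd p) \<omega>)^k) = (\<integral>x. std_normal_density x * x^k \<partial>lborel)"
      using mom IJmem by blast
    ultimately show ?thesis
      by (simp add: Bochner_Integration.integral_sum IJcard[symmetric])
  qed
  have Pint: "integrable M (P t)" for t
    using sumpow[of t 2] unfolding P_def by simp
  have QP: "0 \<le> Qf lam n (\<lambda>i j. xi t i j \<omega>)" "Qf lam n (\<lambda>i j. xi t i j \<omega>) \<le> P t \<omega>" for t \<omega>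
    using Qf_nonneg Qf_le unfolding P_def IJ_def by auto
  have Zbound: "\<bar>Z t \<omega>\<bar> \<le> 1 / (2 * d) * (P t \<omega> + 1)" for t \<omega>
  proof -
    let ?q = "Qf lam n (\<lambda>i j. xi t i j \<omega>)"
    have n0: "real n \<ge> 1" using n by simp
    have "?q / real n \<le> ?q / 1" using QP[of t \<omega>] n0 by (intro divide_left_mono) auto
    then have "?q / real n \<le> ?q" by simp
    moreover have "0 \<le> ?q / real n" using QP[of t \<omega>] by simp
    ultimately have "\<bar>?q / real n - 1\<bar> \<le> P t \<omega> + 1" using QP[of t \<omega>] by linarith
    then have "1 / (2 * d) * \<bar>?q / real n - 1\<bar> \<le> 1 / (2 * d) * (P t \<omega> + 1)"
      using d by (intro mult_left_mono) auto
    then show ?thesis unfolding Z_def using d by (simp add: abs_mult)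
  qed
  show Zint: "integrable M (Z t)" for t
  proof (rule Bochner_Integration.integrable_bound)
    show "integrable M (\<lambda>\<omega>. 1 / (2 * d) * (P t \<omega> + 1))"
      using Pint[of t] by (intro integrable_mult_right Bochner_Integration.integrable_add) auto
    show "AE \<omega> in M. norm (Z t \<omega>) \<le> norm (1 / (2 * d) * (P t \<omega> + 1))"
    proof (intro AE_I2)
      fix \<omega> have "0 \<le> P t \<omega>" unfolding P_def by (intro sum_nonneg) auto
      then show "norm (Z t \<omega>) \<le> norm (1 / (2 * d) * (P t \<omega> + 1))"
        using Zbound[of t \<omega>] d by simp
    qed
  qed simp
  define e where "e t i \<omega> = (if selmat lam (\<lambda>k. xi t k 0 \<omega>) i then 1 else 0 :: real)" for t i \<omega>
  define A :: "nat \<Rightarrow> ('b + nat \<times> nat \<times> nat) set" where "A t = {Inr (t,k,0) | k. k < lam}" for t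
  have AI: "A t \<subseteq> I" for t unfolding A_def using II n by auto
  define H where "H t i v = (if selmat lam (\<lambda>k. v (Inr (t,k,0))) i then 1 else 0 :: real)"
    for t i and v :: "'b + nat \<times> nat \<times> nat \<Rightarrow> real"
  have Hm: "H t i \<in> borel_measurable (PiM (A t) (\<lambda>_. borel))" for t i
  proof -
    have [measurable]: "Measurable.pred (PiM (A t) (\<lambda>_. borel)) (\<lambda>v. selmat lam (\<lambda>k. v (Inr (t,k,0))) i)"
      by (rule selmat_pred) (rule component_meas)
    show ?thesis unfolding H_def by measurable
  qed
  have eH: "e t i = (\<lambda>\<omega>. H t i (restrict (\<lambda>k. W k \<omega>) (A t)))" for t i
  proof
    fix \<omega>
    have "selmat lam (\<lambda>k. xi t k 0 \<omega>) i = selmat lam (\<lambda>k. restrict (\<lambda>k. W k \<omega>) (A t) (Inr (t,k,0))) i"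
      by (rule selmat_cong) (auto simp: A_def WI)
    then show "e t i \<omega> = H t i (restrict (\<lambda>k. W k \<omega>) (A t))" unfolding e_def H_def by simp
  qed
  have em[measurable]: "e t i \<in> borel_measurable M" for t i
    unfolding eH by (rule measurable_comp[OF Vm[OF AI] Hm, unfolded comp_def])
  have eint: "integrable M (e t i)" for t i
    by (rule Bochner_Integration.integrable_bound[of _ "\<lambda>_. 1::real"]) (auto simp: e_def)
  have esum: "(\<Sum>i<lam. e t i \<omega>) = 1" for t \<omega>
    using sum_selmat_delta[OF lam, of "\<lambda>k. xi t k 0 \<omega>" "\<lambda>_. 1"] unfolding e_def by simp
  have esumsq: "(\<Sum>i<lam. e t i \<omega> * (xi t i 0 \<omega>)^2) = (Min ((\<lambda>k. xi t k 0 \<omega>) ` {..<lam}))^2" for t \<omega>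
  proof -
    have "(\<Sum>i<lam. e t i \<omega> * (xi t i 0 \<omega>)^2) =
        (\<Sum>i<lam. if selmat lam (\<lambda>k. xi t k 0 \<omega>) i then (xi t i 0 \<omega>)^2 else 0)"
      unfolding e_def by (intro sum.cong) auto
    also have "\<dots> = (xi t (istar lam (\<lambda>k. xi t k 0 \<omega>)) 0 \<omega>)^2" by (rule sum_selmat_delta[OF lam])
    also have "\<dots> = (Min ((\<lambda>k. xi t k 0 \<omega>) ` {..<lam}))^2"
      using istar_Min[OF lam, of "\<lambda>k. xi t k 0 \<omega>"] by simp
    finally show ?thesis .
  qed
  have Qsplit: "Qf lam n (\<lambda>i j. xi t i j \<omega>) = (\<Sum>j<n. \<Sum>i<lam. e t i \<omega> * (xi t i j \<omega>)^2)" for t \<omega>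
  proof -
    have "Qf lam n (\<lambda>i j. xi t i j \<omega>) = (\<Sum>i<lam. \<Sum>j<n. e t i \<omega> * (xi t i j \<omega>)^2)"
      unfolding Qf_def by (intro sum.cong) (auto simp: e_def)
    also have "\<dots> = (\<Sum>j<n. \<Sum>i<lam. e t i \<omega> * (xi t i j \<omega>)^2)" by (rule sum.swap)
    finally show ?thesis .
  qed
  have exint: "integrable M (\<lambda>\<omega>. e t i \<omega> * (xi t i j \<omega>)^2)" if "i < lam" "j < n" for t i j
  proof (rule Bochner_Integration.integrable_bound[OF conjunct1[OF mom[OF that, of t 2]]])
    have [measurable]: "xi t i j \<in> borel_measurable M" by (rule xm[OF that])
    show "(\<lambda>\<omega>. e t i \<omega> * (xi t i j \<omega>)^2) \<in> borel_measurable M" by measurable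
    show "AE \<omega> in M. norm (e t i \<omega> * (xi t i j \<omega>)^2) \<le> norm ((xi t i j \<omega>)^2)"
      by (auto simp: e_def)
  qed
  have eind: "expectation (\<lambda>\<omega>. e t i \<omega> * (xi t i j \<omega>)^2) = expectation (e t i)"
    if "i < lam" "0 < j" "j < n" for t i j
  proof -
    have dj: "A t \<inter> {Inr (t,i,j)} = {}" using that unfolding A_def by auto
    have sub: "{Inr (t,i,j)} \<subseteq> I" using II that by auto
    have iv: "indep_var (PiM (A t) (\<lambda>_. borel)) (\<lambda>\<omega>. restrict (\<lambda>k. W k \<omega>) (A t))
        (PiM {Inr (t,i,j)} (\<lambda>_. borel)) (\<lambda>\<omega>. restrict (\<lambda>k. W k \<omega>) {Inr (t,i,j)})"
      by (rule indep_var_restrict[OF ind dj AI sub])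
    have sqm: "(\<lambda>v. (v (Inr (t,i,j)))^2) \<in> borel_measurable (PiM {Inr (t,i,j)} (\<lambda>_. (borel::real measure)))"
      using component_meas by measurable
    have iv2: "indep_var borel (H t i \<circ> (\<lambda>\<omega>. restrict (\<lambda>k. W k \<omega>) (A t)))
        borel ((\<lambda>v. (v (Inr (t,i,j)))^2) \<circ> (\<lambda>\<omega>. restrict (\<lambda>k. W k \<omega>) {Inr (t,i,j)}))"
      by (rule indep_var_compose[OF iv Hm sqm])
    have f1: "H t i \<circ> (\<lambda>\<omega>. restrict (\<lambda>k. W k \<omega>) (A t)) = e t i" using eH by (simp add: comp_def)
    have f2: "(\<lambda>v. (v (Inr (t,i,j)))^2) \<circ> (\<lambda>\<omega>. restrict (\<lambda>k. W k \<omega>) {Inr (t,i,j)}) = (\<lambda>\<omega>. (xi t i j \<omega>)^2)"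
      by (simp add: comp_def WI)
    have iv3: "indep_var borel (e t i) borel (\<lambda>\<omega>. (xi t i j \<omega>)^2)" using iv2 unfolding f1 f2 .
    show ?thesis
      using indep_var_lebesgue_integral[OF iv3 eint conjunct1[OF mom[OF that(1,3), of t 2]]] mom2[OF that(1,3), of t]
      by simp
  qed
  have colind: "indep_vars (\<lambda>_. borel) (\<lambda>k. xi t k 0) {..<lam}" for t
  proof -
    have iv: "indep_vars (\<lambda>k. PiM {Inr (t,k,0)} (\<lambda>_. borel)) (\<lambda>k \<omega>. restrict (\<lambda>i. W i \<omega>) {Inr (t,k,0)}) {..<lam}"
      by (rule indep_vars_restrict[OF ind]) (use II n in \<open>auto simp: disjoint_family_on_def\<close>)
    have "indep_vars (\<lambda>_. borel) (\<lambda>k \<omega>. (\<lambda>v. v (Inr (t,k,0))) (restrict (\<lambda>i. W i \<omega>) {Inr (t,k,0)})) {..<lam}"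
      by (rule indep_vars_compose2[OF iv]) (rule component_meas)
    then show ?thesis by (simp add: WI)
  qed
  have distr_std: "distr M borel (xi t k 0) = std_normal_measure" if "k < lam" for t k
  proof -
    have "distr M borel (xi t k 0) = distr M lborel (xi t k 0)" by (rule distr_cong) auto
    also have "\<dots> = density lborel (\<lambda>x. ennreal (std_normal_density x))"
      by (rule distributed_distr_eq_density[OF D]) (use that n in auto)
    finally show ?thesis unfolding std_normal_measure_def .
  qed
  have EMin: "expectation (\<lambda>\<omega>. (Min ((\<lambda>k. xi t k 0 \<omega>) ` {..<lam}))^2) = min_normal_second_moment lam" for t
  proof -
    have rv: "\<And>k. k \<in> {..<lam} \<Longrightarrow> random_variable borel (xi t k 0)" using xm n by auto
    have "0 \<in> {..<lam}" using lam by simp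
    then have ne: "{..<lam} \<noteq> {}" by blast
    have "distr M (PiM {..<lam} (\<lambda>_. borel)) (\<lambda>\<omega>. \<lambda>k\<in>{..<lam}. xi t k 0 \<omega>) = PiM {..<lam} (\<lambda>k. distr M borel (xi t k 0))"
      using indep_vars_iff_distr_eq_PiM'[where I="{..<lam}" and M'="\<lambda>_. borel" and X="\<lambda>k. xi t k 0", OF ne rv] colind[of t] by simp
    also have "\<dots> = PiM {..<lam} (\<lambda>_. std_normal_measure)" by (rule PiM_cong) (auto simp: distr_std)
    finally have eq: "distr M (PiM {..<lam} (\<lambda>_. borel)) (\<lambda>\<omega>. \<lambda>k\<in>{..<lam}. xi t k 0 \<omega>) = PiM {..<lam} (\<lambda>_. std_normal_measure)" .
    have mm: "(\<lambda>\<omega>. \<lambda>k\<in>{..<lam}. xi t k 0 \<omega>) \<in> measurable M (PiM {..<lam} (\<lambda>_. borel))"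
      using rv by (intro measurable_restrict) auto
    have gm: "(\<lambda>x. (Min (x ` {..<lam}))^2) \<in> borel_measurable (PiM {..<lam} (\<lambda>_. (borel::real measure)))"
      using component_meas by measurable
    have "min_normal_second_moment lam =
        integral\<^sup>L (distr M (PiM {..<lam} (\<lambda>_. borel)) (\<lambda>\<omega>. \<lambda>k\<in>{..<lam}. xi t k 0 \<omega>)) (\<lambda>x. (Min (x ` {..<lam}))^2)"
      unfolding min_normal_second_moment_def eq ..
    also have "\<dots> = expectation (\<lambda>\<omega>. (Min ((\<lambda>k\<in>{..<lam}. xi t k 0 \<omega>) ` {..<lam}))^2)"
      by (rule integral_distr[OF mm gm])
    also have "\<dots> = expectation (\<lambda>\<omega>. (Min ((\<lambda>k. xi t k 0 \<omega>) ` {..<lam}))^2)" by simp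
    finally show ?thesis by simp
  qed
  have EQ: "integrable M (\<lambda>\<omega>. Qf lam n (\<lambda>i j. xi t i j \<omega>)) \<and>
      expectation (\<lambda>\<omega>. Qf lam n (\<lambda>i j. xi t i j \<omega>)) = min_normal_second_moment lam + (real n - 1)" for t
  proof -
    define c where "c j = expectation (\<lambda>\<omega>. \<Sum>i<lam. e t i \<omega> * (xi t i j \<omega>)^2)" for j
    have cint: "integrable M (\<lambda>\<omega>. \<Sum>i<lam. e t i \<omega> * (xi t i j \<omega>)^2)" if "j < n" for j
      using exint that by auto
    have c0: "c 0 = min_normal_second_moment lam" unfolding c_def esumsq EMin ..
    have cj: "c j = 1" if "0 < j" "j < n" for j
    proof -
      have "c j = (\<Sum>i<lam. expectation (\<lambda>\<omega>. e t i \<omega> * (xi t i j \<omega>)^2))"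
        unfolding c_def using exint that by (intro Bochner_Integration.integral_sum) auto
      also have "\<dots> = (\<Sum>i<lam. expectation (e t i))" using eind that by (intro sum.cong) auto
      also have "\<dots> = expectation (\<lambda>\<omega>. \<Sum>i<lam. e t i \<omega>)"
        using eint by (intro Bochner_Integration.integral_sum[symmetric]) auto
      also have "\<dots> = 1" by (simp add: esum prob_space)
      finally show ?thesis .
    qed
    have int: "integrable M (\<lambda>\<omega>. Qf lam n (\<lambda>i j. xi t i j \<omega>))" unfolding Qsplit using cint by auto
    have "expectation (\<lambda>\<omega>. Qf lam n (\<lambda>i j. xi t i j \<omega>)) = (\<Sum>j<n. c j)"
      unfolding Qsplit c_def using cint by (intro Bochner_Integration.integral_sum) auto
    also have "\<dots> = min_normal_second_moment lam + (real n - 1)"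
    proof -
      obtain n' where n': "n = Suc n'" using n by (cases n) auto
      have "(\<Sum>j<n. c j) = c 0 + (\<Sum>j<n'. c (Suc j))" unfolding n' by (rule sum.lessThan_Suc_shift)
      also have "(\<Sum>j<n'. c (Suc j)) = (\<Sum>j<n'. 1)" using cj n' by (intro sum.cong) auto
      finally show ?thesis using c0 n' by simp
    qed
    finally show ?thesis using int by simp
  qed
  show EZ: "expectation (Z t) = Delta" for t
  proof -
    let ?Q = "\<lambda>\<omega>. Qf lam n (\<lambda>i j. xi t i j \<omega>)"
    have c1: "has_bochner_integral M (\<lambda>_. 1::real) 1"
      using has_bochner_integral_integrable[of M "\<lambda>_. 1::real"] prob_space by simp
    have "has_bochner_integral M (\<lambda>\<omega>. 1 / (2 * d) * (?Q \<omega> / real n - 1))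
        (1 / (2 * d) * (expectation ?Q / real n - 1))"
      using EQ[of t] c1
      by (intro has_bochner_integral_mult_right has_bochner_integral_diff has_bochner_integral_divide_zero
           has_bochner_integral_integrable) auto
    then have "expectation (Z t) = 1 / (2 * d) * (expectation ?Q / real n - 1)"
      unfolding Z_def by (simp add: has_bochner_integral_iff)
    also have "\<dots> = Delta" unfolding Delta_def using EQ[of t] n d by (simp add: field_simps)
    finally show ?thesis .
  qed
  define Y where "Y t \<omega> = Z t \<omega> - Delta" for t \<omega>
  have Yind: "indep_vars (\<lambda>_. borel) Y UNIV"
  proof -
    have iv: "indep_vars (\<lambda>t. PiM (K t) (\<lambda>_. borel)) (\<lambda>t \<omega>. restrict (\<lambda>k. W k \<omega>) (K t)) UNIV"
      by (rule indep_vars_restrict[OF ind KI Kdisj])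
    have "indep_vars (\<lambda>_. borel) (\<lambda>t \<omega>. (\<lambda>v. G t v - Delta) (restrict (\<lambda>k. W k \<omega>) (K t))) UNIV"
      by (rule indep_vars_compose2[OF iv]) (use Gm in measurable)
    then show ?thesis unfolding Y_def ZG by simp
  qed
  have Ym[measurable]: "Y t \<in> borel_measurable M" for t unfolding Y_def by measurable
  define a where "a = 1 / (2 * d)"
  define b where "b = 1 / (2 * d) + \<bar>Delta\<bar>"
  define N where "N = real (lam * n)"
  define c8 where "c8 = (\<integral>x. std_normal_density x * x^8 \<partial>lborel)"
  define R8 where "R8 t \<omega> = (\<Sum>p\<in>IJ. (xi t (fst p) (snd p) \<omega>)^8)" for t \<omega>
  define Bd where "Bd t \<omega> = 8 * (a^4 * N^3 * R8 t \<omega> + b^4)" for t \<omega>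
  have a0: "0 \<le> a" and b0: "0 \<le> b" unfolding a_def b_def using d by auto
  have R8int: "integrable M (R8 t)" and R8E: "expectation (R8 t) = N * c8" for t
    using sumpow[of t 8] unfolding R8_def N_def c8_def by auto
  have Bdint: "integrable M (Bd t)" for t
    unfolding Bd_def using R8int[of t] by auto
  have BdE: "expectation (Bd t) = 8 * (a^4 * N^3 * (N * c8) + b^4)" for t
    unfolding Bd_def using R8int[of t] R8E[of t] prob_space by simp
  have Y4: "(Y t \<omega>)^4 \<le> Bd t \<omega>" for t \<omega>
  proof -
    have Pnn: "0 \<le> P t \<omega>" unfolding P_def by (intro sum_nonneg) auto
    have "\<bar>Y t \<omega>\<bar> \<le> \<bar>Z t \<omega>\<bar> + \<bar>Delta\<bar>" unfolding Y_def by simp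
    also have "\<dots> \<le> a * P t \<omega> + b"
    proof -
      have "a * P t \<omega> + b = 1 / (2 * d) * (P t \<omega> + 1) + \<bar>Delta\<bar>"
        unfolding a_def b_def by (simp add: algebra_simps add_divide_distrib)
      then show ?thesis using Zbound[of t \<omega>] by linarith
    qed
    finally have yb: "\<bar>Y t \<omega>\<bar> \<le> a * P t \<omega> + b" .
    have "(Y t \<omega>)^4 = \<bar>Y t \<omega>\<bar>^4" by (simp add: power_even_abs_numeral)
    also have "\<dots> \<le> (a * P t \<omega> + b)^4" using yb by (intro power_mono) auto
    also have "\<dots> \<le> 8 * ((a * P t \<omega>)^4 + b^4)" by (rule pow4_add_le)
    also have "(a * P t \<omega>)^4 = a^4 * (P t \<omega>)^4" by (simp add: power_mult_distrib)
    also have "(P t \<omega>)^4 \<le> N^3 * R8 t \<omega>"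
      using sum_pow4_le[of "\<lambda>p. xi t (fst p) (snd p) \<omega>" IJ]
      unfolding P_def R8_def N_def IJcard by simp
    then have "8 * (a^4 * (P t \<omega>)^4 + b^4) \<le> Bd t \<omega>"
      unfolding Bd_def using a0 by (simp add: mult_left_mono mult.assoc)
    finally show ?thesis by simp
  qed
  have Y4int: "integrable M (\<lambda>\<omega>. (Y t \<omega>)^4)" for t
  proof (rule Bochner_Integration.integrable_bound[OF Bdint])
    show "(\<lambda>\<omega>. (Y t \<omega>)^4) \<in> borel_measurable M" by measurable
    show "AE \<omega> in M. norm ((Y t \<omega>)^4) \<le> norm (Bd t \<omega>)"
    proof (intro AE_I2)
      fix \<omega>
      have "0 \<le> (Y t \<omega>)^4" by (simp add: zero_le_even_power')
      then show "norm ((Y t \<omega>)^4) \<le> norm (Bd t \<omega>)" using Y4[of t \<omega>] by simp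
    qed
  qed
  have Y4E: "expectation (\<lambda>\<omega>. (Y t \<omega>)^4) \<le> 8 * (a^4 * N^3 * (N * c8) + b^4)" for t
    using integral_mono[OF Y4int Bdint Y4] BdE by simp
  have YE: "expectation (Y t) = 0" for t
    unfolding Y_def using Zint[of t] EZ[of t] prob_space by simp
  have "AE \<omega> in M. (\<lambda>T. (\<Sum>t<T. Y t \<omega>) / real T) \<longlonglongrightarrow> 0"
    by (rule slln4[OF Yind Y4int YE Y4E])
  then show "AE \<omega> in M. (\<lambda>T. (\<Sum>t<T. Z t \<omega>) / real T) \<longlonglongrightarrow> Delta"
  proof eventually_elim
    case (elim \<omega>)
    have "(\<lambda>T. (\<Sum>t<T. Y t \<omega>) / real T + Delta) \<longlonglongrightarrow> 0 + Delta"
      by (intro tendsto_add elim tendsto_const)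
    then have lim: "(\<lambda>T. (\<Sum>t<T. Y t \<omega>) / real T + Delta) \<longlonglongrightarrow> Delta" by simp
    have "eventually (\<lambda>T. (\<Sum>t<T. Y t \<omega>) / real T + Delta = (\<Sum>t<T. Z t \<omega>) / real T) sequentially"
      unfolding eventually_sequentially
    proof (intro exI allI impI)
      fix T :: nat assume T: "T \<ge> 1"
      have "(\<Sum>t<T. Y t \<omega>) = (\<Sum>t<T. Z t \<omega>) - real T * Delta"
        unfolding Y_def by (simp add: sum_subtractf)
      then show "(\<Sum>t<T. Y t \<omega>) / real T + Delta = (\<Sum>t<T. Z t \<omega>) / real T"
        using T by (simp add: field_simps)
    qed
    then show ?case by (rule Lim_transform_eventually[OF lim])
  qed
qed

end

theorem proposition1:
  fixes M :: "'a measure" and n lam :: nat and d s0 :: real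
    and X0 :: "nat \<Rightarrow> real"
    and p0 :: "nat \<Rightarrow> 'a \<Rightarrow> real" and xi :: "nat \<Rightarrow> nat \<Rightarrow> nat \<Rightarrow> 'a \<Rightarrow> real"
  defines "W \<equiv> (\<lambda>k. case k of Inl j \<Rightarrow> p0 j | Inr (t, i, j) \<Rightarrow> xi t i j)"
  defines "I \<equiv> Inl ` {..<n} \<union> {Inr (t, i, j) | t i j. i < lam \<and> j < n}"
  defines "sg \<equiv> (\<lambda>t \<omega>. fst (snd (csa_es n lam 1 d (\<lambda>x. x 0) X0 s0
                         (\<lambda>j. p0 j \<omega>) (\<lambda>t i j. xi t i j \<omega>) t)))"
  defines "Delta \<equiv> (min_normal_second_moment lam - 1) / (2 * d * real n)"
  assumes "prob_space M"
    and "n \<ge> 1" and "lam \<ge> 1" and "d > 0" and "s0 > 0"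
    and "prob_space.indep_vars M (\<lambda>_. borel) W I"
    and "\<And>k. k \<in> I \<Longrightarrow> distributed M lborel (W k) std_normal_density"
  shows "(AE \<omega> in M. (\<lambda>t. ln (sg t \<omega> / s0) / real t) \<longlonglongrightarrow> Delta)
       \<and> (\<forall>t. integrable M (\<lambda>\<omega>. ln (sg (Suc t) \<omega> / sg t \<omega>))
              \<and> integral\<^sup>L M (\<lambda>\<omega>. ln (sg (Suc t) \<omega> / sg t \<omega>)) = Delta)"
proof -
  interpret P: prob_space M by fact
  note n = \<open>n \<ge> 1\<close> and lam = \<open>lam \<ge> 1\<close> and d = \<open>d > 0\<close> and s0 = \<open>s0 > 0\<close>
  define Z where "Z t \<omega> = 1 / (2 * d) * (Qf lam n (\<lambda>i j. xi t i j \<omega>) / real n - 1)" for t \<omega>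
  have pos: "sg t \<omega> > 0" for t \<omega>
    unfolding sg_def by (rule csa_pos[OF s0])
  have step: "sg (Suc t) \<omega> = sg t \<omega> * exp (Z t \<omega>)" for t \<omega>
    unfolding sg_def Z_def
    using csa_step[OF csa_pos[OF s0], of n lam d X0 "\<lambda>j. p0 j \<omega>" "\<lambda>t i j. xi t i j \<omega>" t]
      Qf_eq[OF lam, of n "\<lambda>i j. xi t i j \<omega>"]
    by simp
  have lnstep: "ln (sg (Suc t) \<omega> / sg t \<omega>) = Z t \<omega>" for t \<omega>
    using pos[of t \<omega>] by (simp add: step)
  have sgsum: "sg t \<omega> = s0 * exp (\<Sum>k<t. Z k \<omega>)" for t \<omega>
  proof (induction t)
    case 0 then show ?case by (simp add: sg_def)
  next
    case (Suc t) then show ?case by (simp add: step exp_add)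
  qed
  have lnsum: "ln (sg t \<omega> / s0) = (\<Sum>k<t. Z k \<omega>)" for t \<omega>
    using s0 by (simp add: sgsum)
  have WI: "W (Inr (t,i,j)) = xi t i j" for t i j unfolding W_def by simp
  have II: "i < lam \<Longrightarrow> j < n \<Longrightarrow> Inr (t,i,j) \<in> I" for t i j unfolding I_def by blast
  note mdl = P.model[of n lam d W xi I, OF n lam d WI II \<open>prob_space.indep_vars M (\<lambda>_. borel) W I\<close>
      assms(11)]
  show ?thesis
    unfolding lnsum lnstep Delta_def
    using mdl unfolding Z_def by (simp add: Z_def)
qed

end
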